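(* Let $x\in M$, let $\mathcal T$ be a family of $f$-induced $(D_0,\delta,\tau)$-local tilings on $W^u(x)$, and consider modified Schmidt games induced by $f$ on $W^u(x)$ with respect to $\mathcal T$. Then: (1) for any integers $a,b>a_*$, every $(a,b)$-winning set is dense in $D_0$; (2) for any integer $a>a_*$, the intersection of countably many $a$-winning sets is $a$-winning.
   Context: $M$ is a smooth compact Riemannian manifold without boundary and $f:M\to M$ a $C^{1+\theta}$ partially hyperbolic diffeomorphism (continuous $Tf$-invariant splitting $TM=E^s\oplus E^c\oplus E^u$ with $E^u$ uniformly expanded and dominating $E^c$, $E^s$ uniformly contracted and dominated by $E^c$). $W^u(x)$ is the unstable manifold through $x$ with induced distance $d^u$ and open balls $B^u(z,r)$. Constants $1<\sigma_1\le\sigma_2$ satisfy $\sigma_1\le\|T_zfv\|\le\sigma_2$ for all unit $v\in E^u_z$. Tilings: $\delta,\tau>0$ small, $D_0\subset W^u(x)$ open connected with $B^u(x_0,\frac{(1-\tau)\delta}{2})\subset D_0\subset B^u(x_0,(1+\tau)\delta)$ for some $x_0\in W^u(x)$. A family $D^i_n$ ($n\ge1$, $1\le i\le k_n$) of subsets of $W^u(x)$ is a family of $f$-induced $(D_0,\delta,\tau)$-local tilings if: (1) each $D^i_n$ is open connected with $B^u(f^n(x^i_n),\frac{(1-\tau)\delta}{2})\subset f^n(D^i_n)\subset B^u(f^n(x^i_n),(1+\tau)\delta)$ for some $x^i_n\in W^u(x)$; (2) $D^i_n\cap D^j_n=\emptyset$ for $i\ne j$; (3) $D_0\subset\bigcup_i\overline{D^i_n}$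 and $D^i_n\cap D_0\neq\emptyset$. With $\mathcal T_0=\{D_0\}$, elements of $\mathcal T_n$ are $n$-atoms, $\mathbf T_n$ their union, $\Omega=\{(z,n):z\in\mathbf T_n\}$, $\psi(z,n)$ the $n$-atom containing $z$, $(z,n)\le(z',n')$ iff $\psi(z,n)\subset\psi(z',n')$. Games: fix a positive integer $a_*$ with $(1+\tau)\delta\sigma_1^{-a_*}<(1-\tau)\delta/4$ (then each atom $\psi(z,n)$ contains an $(n+m)$-atom for all $m>a_*$). For $a,b>a_*$ and target $S\subset W^u(x)$: Bob chooses $\omega_1=(z_1,n_1)\in\Omega$; Alice chooses $\omega'_1\le\omega_1$ at level $n_1+a$; in turn $k$ Bob chooses $\omega_k\le\omega'_{k-1}$ at level $n'_{k-1}+b$, Alice chooses $\omega'_k\le\omega_k$ at level $n_k+a$. The nested atoms shrink to a unique point $z_\infty$; Alice wins iff $z_\infty\in S$. $S$ is $(a,b)$-winning if Alice has a strategy that always wins; $a$-winning if $(a,b)$-winning for every $b>a_*$. *)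

theory Defs
  imports "HOL-Analysis.Analysis"
begin

text \<open>The type 'a plays the role of the manifold M, Wu y is the unstable leaf through y,
  du is the induced leaf distance d^u, and f is the diffeomorphism.  Only those
  properties of the smooth setting that concern the leaves are recorded.\<close>

definition unstable_leaf_system ::
  "('a \<Rightarrow> 'a) \<Rightarrow> ('a \<Rightarrow> 'a set) \<Rightarrow> ('a \<Rightarrow> 'a \<Rightarrow> real) \<Rightarrow> real \<Rightarrow> real \<Rightarrow> bool" where
  "unstable_leaf_system f Wu du \<sigma>1 \<sigma>2 \<longleftrightarrow>
     bij f \<and> 1 < \<sigma>1 \<and> \<sigma>1 \<le> \<sigma>2 \<and>
     (\<forall>y. y \<in> Wu y) \<and>
     (\<forall>y z. z \<in> Wu y \<longrightarrow> Wu z = Wu y) \<and>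
     (\<forall>y. f ` Wu y = Wu (f y)) \<and>
     (\<forall>y. Metric_space (Wu y) du) \<and>
     (\<forall>y. Metric_space.mcomplete (Wu y) du) \<and>
     (\<forall>y z. z \<in> Wu y \<longrightarrow> \<sigma>1 * du y z \<le> du (f y) (f z) \<and> du (f y) (f z) \<le> \<sigma>2 * du y z)"

definition leaftop :: "('a \<Rightarrow> 'a set) \<Rightarrow> ('a \<Rightarrow> 'a \<Rightarrow> real) \<Rightarrow> 'a \<Rightarrow> 'a topology" where
  "leaftop Wu du x = Metric_space.mtopology (Wu x) du"

definition uball :: "('a \<Rightarrow> 'a set) \<Rightarrow> ('a \<Rightarrow> 'a \<Rightarrow> real) \<Rightarrow> 'a \<Rightarrow> real \<Rightarrow> 'a set" where
  "uball Wu du z r = Metric_space.mball (Wu z) du z r"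

definition local_tilings ::
  "('a \<Rightarrow> 'a) \<Rightarrow> ('a \<Rightarrow> 'a set) \<Rightarrow> ('a \<Rightarrow> 'a \<Rightarrow> real) \<Rightarrow> 'a \<Rightarrow> 'a set \<Rightarrow> real \<Rightarrow> real
    \<Rightarrow> (nat \<Rightarrow> nat) \<Rightarrow> (nat \<Rightarrow> nat \<Rightarrow> 'a set) \<Rightarrow> bool" where
  "local_tilings f Wu du x D0 \<delta> \<tau> k D \<longleftrightarrow>
     0 < \<delta> \<and> 0 < \<tau> \<and>
     openin (leaftop Wu du x) D0 \<and> connectedin (leaftop Wu du x) D0 \<and>
     (\<exists>x0 \<in> Wu x. uball Wu du x0 ((1 - \<tau>) * \<delta> / 2) \<subseteq> D0 \<and> D0 \<subseteq> uball Wu du x0 ((1 + \<tau>) * \<delta>)) \<and>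
     (\<forall>n \<ge> 1.
        (\<forall>i \<in> {1..k n}.
            openin (leaftop Wu du x) (D n i) \<and> connectedin (leaftop Wu du x) (D n i) \<and>
            (\<exists>xi \<in> Wu x. uball Wu du ((f ^^ n) xi) ((1 - \<tau>) * \<delta> / 2) \<subseteq> (f ^^ n) ` D n i \<and>
                          (f ^^ n) ` D n i \<subseteq> uball Wu du ((f ^^ n) xi) ((1 + \<tau>) * \<delta>)) \<and>
            D n i \<inter> D0 \<noteq> {}) \<and>
        (\<forall>i \<in> {1..k n}. \<forall>j \<in> {1..k n}. i \<noteq> j \<longrightarrow> D n i \<inter> D n j = {}) \<and>
        D0 \<subseteq> (\<Union>i \<in> {1..k n}. leaftop Wu du x closure_of (D n i)))"

definition tiles :: "'a set \<Rightarrow> (nat \<Rightarrow> nat) \<Rightarrow> (nat \<Rightarrow> nat \<Rightarrow> 'a set) \<Rightarrow> nat \<Rightarrow> 'a set set" where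
  "tiles D0 k D n = (if n = 0 then {D0} else D n ` {1..k n})"

definition atom :: "'a set \<Rightarrow> (nat \<Rightarrow> nat) \<Rightarrow> (nat \<Rightarrow> nat \<Rightarrow> 'a set) \<Rightarrow> 'a \<times> nat \<Rightarrow> 'a set" where
  "atom D0 k D \<omega> = (THE A. A \<in> tiles D0 k D (snd \<omega>) \<and> fst \<omega> \<in> A)"

definition Omega :: "'a set \<Rightarrow> (nat \<Rightarrow> nat) \<Rightarrow> (nat \<Rightarrow> nat \<Rightarrow> 'a set) \<Rightarrow> ('a \<times> nat) set" where
  "Omega D0 k D = {(z, n). z \<in> \<Union>(tiles D0 k D n)}"

definition pos_le :: "'a set \<Rightarrow> (nat \<Rightarrow> nat) \<Rightarrow> (nat \<Rightarrow> nat \<Rightarrow> 'a set) \<Rightarrow> 'a \<times> nat \<Rightarrow> 'a \<times> nat \<Rightarrow> bool" where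
  "pos_le D0 k D \<omega> \<omega>' \<longleftrightarrow> atom D0 k D \<omega> \<subseteq> atom D0 k D \<omega>'"

definition outcome ::
  "('a \<Rightarrow> 'a set) \<Rightarrow> ('a \<Rightarrow> 'a \<Rightarrow> real) \<Rightarrow> 'a \<Rightarrow> 'a set \<Rightarrow> (nat \<Rightarrow> nat) \<Rightarrow> (nat \<Rightarrow> nat \<Rightarrow> 'a set)
    \<Rightarrow> (nat \<Rightarrow> 'a \<times> nat) \<Rightarrow> 'a" where
  "outcome Wu du x D0 k D alice =
     (THE z. z \<in> Wu x \<and> (\<forall>j. z \<in> leaftop Wu du x closure_of atom D0 k D (alice j)))"

text \<open>Bob's moves are bob 0, bob 1, ...; Alice's strategy sigma maps the list
  of Bob's moves so far to her answer.\<close>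
definition ab_winning ::
  "('a \<Rightarrow> 'a set) \<Rightarrow> ('a \<Rightarrow> 'a \<Rightarrow> real) \<Rightarrow> 'a \<Rightarrow> 'a set \<Rightarrow> (nat \<Rightarrow> nat) \<Rightarrow> (nat \<Rightarrow> nat \<Rightarrow> 'a set)
    \<Rightarrow> nat \<Rightarrow> nat \<Rightarrow> 'a set \<Rightarrow> bool" where
  "ab_winning Wu du x D0 k D a b S \<longleftrightarrow>
     (\<exists>\<sigma> :: ('a \<times> nat) list \<Rightarrow> 'a \<times> nat. \<forall>bob :: nat \<Rightarrow> 'a \<times> nat.
        let alice = (\<lambda>j. \<sigma> (map bob [0..<Suc j]));
            bob_ok = (\<lambda>j. bob j \<in> Omega D0 k D \<and>
                         (0 < j \<longrightarrow> snd (bob j) = snd (alice (j - 1)) + b \<and>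
                                    pos_le D0 k D (bob j) (alice (j - 1))));
            alice_ok = (\<lambda>j. alice j \<in> Omega D0 k D \<and> snd (alice j) = snd (bob j) + a \<and>
                           pos_le D0 k D (alice j) (bob j))
        in (\<forall>j. (\<forall>i \<le> j. bob_ok i) \<and> (\<forall>i < j. alice_ok i) \<longrightarrow> alice_ok j) \<and>
           ((\<forall>j. bob_ok j \<and> alice_ok j) \<longrightarrow> outcome Wu du x D0 k D alice \<in> S))"

definition a_winning ::
  "('a \<Rightarrow> 'a set) \<Rightarrow> ('a \<Rightarrow> 'a \<Rightarrow> real) \<Rightarrow> 'a \<Rightarrow> 'a set \<Rightarrow> (nat \<Rightarrow> nat) \<Rightarrow> (nat \<Rightarrow> nat \<Rightarrow> 'a set)
    \<Rightarrow> nat \<Rightarrow> nat \<Rightarrow> 'a set \<Rightarrow> bool" where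
  "a_winning Wu du x D0 k D a_star a S \<longleftrightarrow> (\<forall>b > a_star. ab_winning Wu du x D0 k D a b S)"

end

theory Submission
  imports Defs
begin


definition bok where "bok D0 k D b bob alice j \<longleftrightarrow> bob j \<in> Omega D0 k D \<and>
   (0 < j \<longrightarrow> snd (bob j) = snd (alice (j - 1)) + b \<and> pos_le D0 k D (bob j) (alice (j - 1)))"
definition aok where "aok D0 k D a bob alice j \<longleftrightarrow> alice j \<in> Omega D0 k D \<and>
   snd (alice j) = snd (bob j) + a \<and> pos_le D0 k D (alice j) (bob j)"
definition play :: "(('a\<times>nat) list \<Rightarrow> 'a\<times>nat) \<Rightarrow> (nat \<Rightarrow> 'a\<times>nat) \<Rightarrow> nat \<Rightarrow> 'a\<times>nat" where
  "play \<sigma> bob = (\<lambda>j. \<sigma> (map bob [0..<Suc j]))"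

definition wins where "wins Wu du x D0 k D a b S \<sigma> \<longleftrightarrow> (\<forall>bob.
   (\<forall>j. (\<forall>i\<le>j. bok D0 k D b bob (play \<sigma> bob) i) \<and> (\<forall>i<j. aok D0 k D a bob (play \<sigma> bob) i)
        \<longrightarrow> aok D0 k D a bob (play \<sigma> bob) j) \<and>
   ((\<forall>j. bok D0 k D b bob (play \<sigma> bob) j \<and> aok D0 k D a bob (play \<sigma> bob) j)
        \<longrightarrow> outcome Wu du x D0 k D (play \<sigma> bob) \<in> S))"

lemma ab_winning_alt:
 "ab_winning Wu du x D0 k D a b S \<longleftrightarrow> (\<exists>\<sigma>. wins Wu du x D0 k D a b S \<sigma>)"
  unfolding wins_def ab_winning_def bok_def aok_def play_def Let_def by simp

lemma pos_le_trans: "pos_le D0 k D u v \<Longrightarrow> pos_le D0 k D v w \<Longrightarrow> pos_le D0 k D u w"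
  unfolding pos_le_def by blast

lemma chain:
  assumes "\<forall>t\<le>j'+Suc d. bok D0 k D b bob alice t" "\<forall>t<j'+Suc d. j' \<le> t \<longrightarrow> aok D0 k D a bob alice t"
  shows "snd (bob (j'+Suc d)) = snd (alice j') + d*(a+b) + b \<and> pos_le D0 k D (bob (j'+Suc d)) (alice j')"
  using assms
proof (induction d)
  case 0
  then have "bok D0 k D b bob alice (Suc j')" by auto
  then show ?case by (simp add: bok_def)
next
  case (Suc d)
  then have IH: "snd (bob (j'+Suc d)) = snd (alice j') + d*(a+b) + b \<and> pos_le D0 k D (bob (j'+Suc d)) (alice j')"
    by auto
  have b1: "bok D0 k D b bob alice (j'+Suc (Suc d))" using Suc.prems by auto
  have a1: "aok D0 k D a bob alice (j'+Suc d)" using Suc.prems by auto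
  from b1 have "snd (bob (j'+Suc (Suc d))) = snd (alice (j'+Suc d)) + b"
     "pos_le D0 k D (bob (j'+Suc (Suc d))) (alice (j'+Suc d))" by (auto simp: bok_def)
  moreover from a1 have "snd (alice (j'+Suc d)) = snd (bob (j'+Suc d)) + a"
     "pos_le D0 k D (alice (j'+Suc d)) (bob (j'+Suc d))" by (auto simp: aok_def)
  ultimately show ?case using IH by (auto simp: algebra_simps intro: pos_le_trans)
qed

lemma nested:
  assumes "\<forall>j. bok D0 k D b bob alice j \<and> aok D0 k D a bob alice j" "(j::nat) \<le> j'"
  shows "pos_le D0 k D (alice j') (alice j)"
  using assms(2)
proof (induction j' rule: dec_induct)
  case base then show ?case by (simp add: pos_le_def)
next
  case (step n)
  have "pos_le D0 k D (alice (Suc n)) (bob (Suc n))" using assms(1) by (simp add: aok_def)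
  moreover have "pos_le D0 k D (bob (Suc n)) (alice n)" using assms(1)[rule_format, of "Suc n"] by (simp add: bok_def)
  ultimately show ?case using step by (blast intro: pos_le_trans)
qed

definition pos :: "nat \<Rightarrow> nat \<Rightarrow> nat" where "pos i m = 2^i*(2*m+1) - 1"

lemma pos_Suc: "pos i (Suc m) = pos i m + Suc (2*2^i - 1)"
proof -
  have "(1::nat) \<le> 2^i" by simp
  then show ?thesis unfolding pos_def by (simp add: algebra_simps)
qed

lemma pos_ge: "m \<le> pos i m"
proof -
  have "(1::nat) \<le> 2^i" by simp
  then have "2*m+1 \<le> 2^i*(2*m+1)" using mult_le_mono1[of 1 "2^i" "2*m+1"] by simp
  then show ?thesis unfolding pos_def by simp
qed

lemma pos_mono: "m' \<le> m \<Longrightarrow> pos i m' \<le> pos i m"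
  unfolding pos_def by (intro diff_le_mono) simp

lemma pos_surj_aux: "0 < n \<Longrightarrow> \<exists>i m. 2^i*(2*m+1) = (n::nat)"
proof (induction n rule: less_induct)
  case (less n)
  show ?case
  proof (cases "even n")
    case True
    then obtain n' where n': "n = 2*n'" by blast
    with less.prems have "0 < n'" "n' < n" by auto
    with less.IH obtain i m where "2^i*(2*m+1) = n'" by blast
    then have "2^Suc i*(2*m+1) = n" using n' by simp
    then show ?thesis by blast
  next
    case False
    then obtain m where "n = 2*m+1" using oddE by blast
    then have "2^0*(2*m+1) = n" by simp
    then show ?thesis by blast
  qed
qed

lemma pos_surj: "\<exists>i m. pos i m = j"
proof -
  obtain i m where "2^i*(2*m+1) = Suc j" using pos_surj_aux[of "Suc j"] by blast
  then have "pos i m = j" unfolding pos_def by simp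
  then show ?thesis by blast
qed

lemma pos_inj_aux: "2^i*(2*m+1) = 2^i'*(2*m'+1) \<Longrightarrow> i = i' \<and> m = (m'::nat)"
proof (induction i arbitrary: i')
  case 0
  have "i' = 0"
  proof (rule ccontr)
    assume "i' \<noteq> 0"
    then have "even (2^i'*(2*m'+1))" by simp
    then have "even ((2::nat)^0*(2*m+1))" using 0 by metis
    then show False by simp
  qed
  then show ?case using 0 by simp
next
  case (Suc i)
  have "even ((2::nat)^Suc i*(2*m+1))" by simp
  then have "even (2^i'*(2*m'+1))" using Suc.prems by metis
  then obtain i0 where i0: "i' = Suc i0" by (cases i') auto
  with Suc.prems have "2^i*(2*m+1) = 2^i0*(2*m'+1)" by simp
  with Suc.IH show ?case using i0 by auto
qed

lemma pos_inj: "pos i m = pos i' m' \<Longrightarrow> i = i' \<and> m = m'"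
proof -
  assume "pos i m = pos i' m'"
  moreover have "(1::nat) \<le> 2^i*(2*m+1)" "(1::nat) \<le> 2^i'*(2*m'+1)"
    by (simp_all add: Suc_leI)
  ultimately have "2^i*(2*m+1) = 2^i'*(2*m'+1)" unfolding pos_def by linarith
  then show ?thesis by (rule pos_inj_aux)
qed

definition dec :: "nat \<Rightarrow> nat \<times> nat" where "dec j = (SOME p. pos (fst p) (snd p) = j)"

lemma dec_pos: "dec (pos i m) = (i, m)"
proof -
  have "\<exists>p. pos (fst p) (snd p) = pos i m" by (rule exI[of _ "(i,m)"]) simp
  then have "pos (fst (dec (pos i m))) (snd (dec (pos i m))) = pos i m"
    unfolding dec_def by (rule someI_ex)
  then show ?thesis using pos_inj by (metis prod.collapse)
qed

definition combine :: "(nat \<Rightarrow> ('a\<times>nat) list \<Rightarrow> 'a\<times>nat) \<Rightarrow> ('a\<times>nat) list \<Rightarrow> 'a\<times>nat" where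
  "combine \<sigma>s l = \<sigma>s (fst (dec (length l - 1)))
      (map (\<lambda>m'. l ! pos (fst (dec (length l - 1))) m') [0..<Suc (snd (dec (length l - 1)))])"

lemma play_combine: "play (combine \<sigma>s) bob (pos i m) = play (\<sigma>s i) (bob \<circ> pos i) m"
proof -
  have "map (\<lambda>m'. map bob [0..<Suc (pos i m)] ! pos i m') [0..<Suc m] = map (bob \<circ> pos i) [0..<Suc m]"
  proof (rule map_cong[OF refl])
    fix m' assume "m' \<in> set [0..<Suc m]"
    then have "pos i m' < Suc (pos i m)" using pos_mono[of m' m i] by auto
    then show "map bob [0..<Suc (pos i m)] ! pos i m' = (bob \<circ> pos i) m'" by (simp del: upt_Suc)
  qed
  moreover have "length (map bob [0..<Suc (pos i m)]) - 1 = pos i m" by simp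
  ultimately show ?thesis unfolding play_def combine_def by (simp only: dec_pos fst_conv snd_conv)
qed

lemma vbok:
  assumes "\<forall>t\<le>pos i m. bok D0 k D b bob alice t" "\<forall>t<pos i m. aok D0 k D a bob alice t"
  shows "bok D0 k D ((2*2^i - 1)*(a+b) + b) (bob \<circ> pos i) (alice \<circ> pos i) m"
proof (cases m)
  case 0
  then show ?thesis using assms(1) by (auto simp: bok_def)
next
  case (Suc m0)
  then have e: "pos i m = pos i m0 + Suc (2*2^i - 1)" using pos_Suc by simp
  have "snd (bob (pos i m0 + Suc (2*2^i - 1))) = snd (alice (pos i m0)) + (2*2^i - 1)*(a+b) + b \<and>
      pos_le D0 k D (bob (pos i m0 + Suc (2*2^i - 1))) (alice (pos i m0))"
    by (rule chain) (use assms e in auto)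
  then show ?thesis using assms(1) Suc e by (auto simp: bok_def)
qed

lemma part2:
  assumes "a_star < a" "\<forall>i::nat. a_winning Wu du x D0 k D a_star a (Ss i)"
  shows "a_winning Wu du x D0 k D a_star a (\<Inter>i. Ss i)"
  unfolding a_winning_def
proof (intro allI impI)
  fix b assume b: "a_star < b"
  define bi where "bi i = (2*2^i - 1)*(a+b) + b" for i::nat
  have "\<exists>\<sigma>. wins Wu du x D0 k D a (bi i) (Ss i) \<sigma>" for i
  proof -
    have "a_star < bi i" using b unfolding bi_def by simp
    then have "ab_winning Wu du x D0 k D a (bi i) (Ss i)" using assms(2) unfolding a_winning_def by blast
    then show ?thesis unfolding ab_winning_alt .
  qed
  then obtain \<sigma>s where \<sigma>s0: "\<And>i. wins Wu du x D0 k D a (bi i) (Ss i) (\<sigma>s i)" by metis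
  note \<sigma>s = \<sigma>s0[unfolded wins_def, rule_format]
  have va0: "play (\<sigma>s i) (bob \<circ> pos i) = play (combine \<sigma>s) bob \<circ> pos i" for i bob
    by (simp add: fun_eq_iff play_combine)
  have vaok0: "aok D0 k D a (bob \<circ> pos i) (alice \<circ> pos i) m \<longleftrightarrow> aok D0 k D a bob alice (pos i m)" for i m bob alice
    by (simp add: aok_def)
  show "ab_winning Wu du x D0 k D a b (\<Inter>i. Ss i)"
    unfolding ab_winning_alt wins_def
  proof (rule exI[of _ "combine \<sigma>s"], rule allI, rule conjI[OF _ impI])
    fix bob
    define alice where "alice = play (combine \<sigma>s) bob"
    show "\<forall>j. (\<forall>t\<le>j. bok D0 k D b bob (play (combine \<sigma>s) bob) t) \<and> (\<forall>t<j. aok D0 k D a bob (play (combine \<sigma>s) bob) t)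
        \<longrightarrow> aok D0 k D a bob (play (combine \<sigma>s) bob) j"
    proof (intro allI impI)
      fix j assume H: "(\<forall>t\<le>j. bok D0 k D b bob (play (combine \<sigma>s) bob) t) \<and> (\<forall>t<j. aok D0 k D a bob (play (combine \<sigma>s) bob) t)"
      note va = va0[of _ bob, folded alice_def]
      note vaok = vaok0
      obtain i m where j: "pos i m = j" using pos_surj by blast
      have "bok D0 k D (bi i) (bob \<circ> pos i) (play (\<sigma>s i) (bob \<circ> pos i)) m'" if "m' \<le> m" for m'
      proof -
        have "pos i m' \<le> j" using pos_mono[OF that, of i] j by simp
        then have "bok D0 k D (bi i) (bob \<circ> pos i) (alice \<circ> pos i) m'"
          unfolding bi_def by (intro vbok) (use H alice_def in auto)
        then show ?thesis using va by simp
      qed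
      moreover have "aok D0 k D a (bob \<circ> pos i) (play (\<sigma>s i) (bob \<circ> pos i)) m'" if "m' < m" for m'
      proof -
        have "pos i m' \<le> pos i m" using pos_mono[of m' m i] that by simp
        moreover have "pos i m' \<noteq> pos i m" using pos_inj[of i m' i m] that by auto
        ultimately have "pos i m' < j" using j by simp
        then show ?thesis using va vaok H alice_def by simp
      qed
      ultimately have "aok D0 k D a (bob \<circ> pos i) (play (\<sigma>s i) (bob \<circ> pos i)) m"
        using \<sigma>s[of i "bob \<circ> pos i"] by blast
      then show "aok D0 k D a bob (play (combine \<sigma>s) bob) j" using va vaok j alice_def by simp
    qed
  next
    fix bob
    define alice where "alice = play (combine \<sigma>s) bob"
    note va = va0[of _ bob, folded alice_def]
    note vaok = vaok0
    assume all: "\<forall>j. bok D0 k D b bob (play (combine \<sigma>s) bob) j \<and> aok D0 k D a bob (play (combine \<sigma>s) bob) j"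
    show "outcome Wu du x D0 k D (play (combine \<sigma>s) bob) \<in> (\<Inter>i. Ss i)"
    proof
      fix i assume "i \<in> (UNIV::nat set)"
      have "bok D0 k D (bi i) (bob \<circ> pos i) (alice \<circ> pos i) m" for m
        unfolding bi_def by (intro vbok) (use all alice_def in auto)
      moreover have "aok D0 k D a (bob \<circ> pos i) (alice \<circ> pos i) m" for m
        using vaok all alice_def by simp
      ultimately have "outcome Wu du x D0 k D (alice \<circ> pos i) \<in> Ss i"
        using \<sigma>s[of i "bob \<circ> pos i"] va by simp
      moreover have "outcome Wu du x D0 k D (alice \<circ> pos i) = outcome Wu du x D0 k D alice"
        unfolding outcome_def
      proof (rule arg_cong[where f=The], rule ext)
        fix z
        have "(\<forall>j. z \<in> leaftop Wu du x closure_of atom D0 k D ((alice \<circ> pos i) j)) \<longleftrightarrow>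
              (\<forall>j. z \<in> leaftop Wu du x closure_of atom D0 k D (alice j))"
        proof
          assume L: "\<forall>j. z \<in> leaftop Wu du x closure_of atom D0 k D ((alice \<circ> pos i) j)"
          show "\<forall>j. z \<in> leaftop Wu du x closure_of atom D0 k D (alice j)"
          proof
            fix j
            have "pos_le D0 k D (alice (pos i j)) (alice j)"
              by (rule nested[OF _ pos_ge]) (use all alice_def in auto)
            then show "z \<in> leaftop Wu du x closure_of atom D0 k D (alice j)"
              using L closure_of_mono unfolding pos_le_def by fastforce
          qed
        qed auto
        then show "(z \<in> Wu x \<and> (\<forall>j. z \<in> leaftop Wu du x closure_of atom D0 k D ((alice \<circ> pos i) j))) =
              (z \<in> Wu x \<and> (\<forall>j. z \<in> leaftop Wu du x closure_of atom D0 k D (alice j)))" by simp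
      qed
      ultimately show "outcome Wu du x D0 k D (play (combine \<sigma>s) bob) \<in> Ss i" using alice_def by simp
    qed
  qed
qed



locale tset =
  fixes f :: "'a \<Rightarrow> 'a" and Wu :: "'a \<Rightarrow> 'a set" and du :: "'a \<Rightarrow> 'a \<Rightarrow> real"
    and \<sigma>1 \<sigma>2 \<delta> \<tau> :: real and x :: 'a and D0 :: "'a set"
    and k :: "nat \<Rightarrow> nat" and D :: "nat \<Rightarrow> nat \<Rightarrow> 'a set" and a_star :: nat
  assumes uls: "unstable_leaf_system f Wu du \<sigma>1 \<sigma>2"
    and lt: "local_tilings f Wu du x D0 \<delta> \<tau> k D"
    and ineq: "(1 + \<tau>) * \<delta> * \<sigma>1 powr (- real a_star) < (1 - \<tau>) * \<delta> / 4"
begin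

lemma bij_f: "bij f" and s1: "1 < \<sigma>1" and s12: "\<sigma>1 \<le> \<sigma>2"
  and self_leaf: "\<And>y. y \<in> Wu y" and leaf_eq: "\<And>y z. z \<in> Wu y \<Longrightarrow> Wu z = Wu y"
  and leaf_img: "\<And>y. f ` Wu y = Wu (f y)"
  and MS: "\<And>y. Metric_space (Wu y) du"
  and complete: "\<And>y. Metric_space.mcomplete (Wu y) du"
  and exp1: "\<And>y z. z \<in> Wu y \<Longrightarrow> \<sigma>1 * du y z \<le> du (f y) (f z) \<and> du (f y) (f z) \<le> \<sigma>2 * du y z"
  using uls unfolding unstable_leaf_system_def by auto

lemma dpos: "0 < \<delta>" and tpos: "0 < \<tau>"
  using lt unfolding local_tilings_def by auto

lemma tlt1: "\<tau> < 1"
proof -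
  have "0 < (1 + \<tau>) * \<delta> * \<sigma>1 powr (- real a_star)" using dpos tpos s1 by simp
  then have "0 < (1 - \<tau>) * \<delta>" using ineq by simp
  then show ?thesis using dpos by (simp add: zero_less_mult_iff)
qed

sublocale W: Metric_space "Wu x" du by (rule MS)

lemma lt_facts:
  "openin W.mtopology D0"
  "\<exists>x0 \<in> Wu x. uball Wu du x0 ((1 - \<tau>) * \<delta> / 2) \<subseteq> D0 \<and> D0 \<subseteq> uball Wu du x0 ((1 + \<tau>) * \<delta>)"
  "\<And>n i. n \<ge> 1 \<Longrightarrow> i \<in> {1..k n} \<Longrightarrow> openin W.mtopology (D n i) \<and>
     (\<exists>xi \<in> Wu x. uball Wu du ((f ^^ n) xi) ((1 - \<tau>) * \<delta> / 2) \<subseteq> (f ^^ n) ` D n i \<and>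
                          (f ^^ n) ` D n i \<subseteq> uball Wu du ((f ^^ n) xi) ((1 + \<tau>) * \<delta>))"
  "\<And>n i j. n \<ge> 1 \<Longrightarrow> i \<in> {1..k n} \<Longrightarrow> j \<in> {1..k n} \<Longrightarrow> i \<noteq> j \<Longrightarrow> D n i \<inter> D n j = {}"
  "\<And>n. n \<ge> 1 \<Longrightarrow> D0 \<subseteq> (\<Union>i \<in> {1..k n}. W.mtopology closure_of (D n i))"
  using lt unfolding local_tilings_def leaftop_def by auto

lemma fn_leaf: "z \<in> Wu y \<Longrightarrow> (f^^n) z \<in> Wu ((f^^n) y)"
proof (induction n)
  case 0 then show ?case by simp
next
  case (Suc n)
  then show ?case using leaf_img[of "(f^^n) y"] by auto
qed

lemma fn_exp: "z \<in> Wu y \<Longrightarrow> \<sigma>1^n * du y z \<le> du ((f^^n) y) ((f^^n) z) \<and> du ((f^^n) y) ((f^^n) z) \<le> \<sigma>2^n * du y z"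
proof (induction n)
  case 0 then show ?case by simp
next
  case (Suc n)
  have z': "(f^^n) z \<in> Wu ((f^^n) y)" using fn_leaf Suc.prems by blast
  have s1p: "0 \<le> \<sigma>1" "0 \<le> \<sigma>2" using s1 s12 by auto
  have "\<sigma>1^Suc n * du y z = \<sigma>1 * (\<sigma>1^n * du y z)" by simp
  also have "\<dots> \<le> \<sigma>1 * du ((f^^n) y) ((f^^n) z)" using Suc s1p by (intro mult_left_mono) auto
  also have "\<dots> \<le> du ((f^^Suc n) y) ((f^^Suc n) z)" using exp1[OF z'] by simp
  finally have A: "\<sigma>1^Suc n * du y z \<le> du ((f^^Suc n) y) ((f^^Suc n) z)" .
  have "du ((f^^Suc n) y) ((f^^Suc n) z) \<le> \<sigma>2 * du ((f^^n) y) ((f^^n) z)" using exp1[OF z'] by simp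
  also have "\<dots> \<le> \<sigma>2 * (\<sigma>2^n * du y z)" using Suc s1p by (intro mult_left_mono) auto
  also have "\<dots> = \<sigma>2^Suc n * du y z" by simp
  finally show ?case using A by simp
qed

lemma tile_data0:
  assumes T: "T \<subseteq> Wu x" and c: "c \<in> Wu x"
    and i1: "uball Wu du ((f^^n) c) ((1-\<tau>)*\<delta>/2) \<subseteq> (f^^n) ` T"
    and i2: "(f^^n) ` T \<subseteq> uball Wu du ((f^^n) c) ((1+\<tau>)*\<delta>)"
  shows "c \<in> T \<and> (\<forall>q\<in>Wu x. du ((f^^n) c) ((f^^n) q) < (1-\<tau>)*\<delta>/2 \<longrightarrow> q \<in> T) \<and>
         (\<forall>q\<in>T. du ((f^^n) c) ((f^^n) q) < (1+\<tau>)*\<delta>)"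
proof -
  interpret N: Metric_space "Wu ((f^^n) c)" du by (rule MS)
  have inj: "inj (f^^n)" using bij_f by (simp add: bij_is_inj)
  have fc: "(f^^n) c \<in> Wu ((f^^n) c)" by (rule self_leaf)
  have fq: "(f^^n) q \<in> Wu ((f^^n) c)" if "q \<in> Wu x" for q
  proof -
    have "q \<in> Wu c" using that leaf_eq[OF c] by simp
    then show ?thesis by (rule fn_leaf)
  qed
  have A: "q \<in> T" if q: "q \<in> Wu x" and dq: "du ((f^^n) c) ((f^^n) q) < (1-\<tau>)*\<delta>/2" for q
  proof -
    have "(f^^n) q \<in> N.mball ((f^^n) c) ((1-\<tau>)*\<delta>/2)"
      using fc fq[OF q] dq by (simp only: N.in_mball simp_thms)
    then have "(f^^n) q \<in> uball Wu du ((f^^n) c) ((1-\<tau>)*\<delta>/2)" by (simp only: uball_def)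
    then have "(f^^n) q \<in> (f^^n) ` T" by (rule subsetD[OF i1])
    then obtain p where p: "p \<in> T" "(f^^n) q = (f^^n) p" by (rule imageE)
    have "q = p" by (rule injD[OF inj p(2)])
    then show ?thesis using p(1) by simp
  qed
  have pos: "0 < (1-\<tau>)*\<delta>/2" using tlt1 dpos by simp
  have z: "du ((f^^n) c) ((f^^n) c) = 0" by (rule N.mdist_zero[OF fc])
  have cT: "c \<in> T" by (rule A[OF c]) (simp only: z pos)
  have B: "du ((f^^n) c) ((f^^n) q) < (1+\<tau>)*\<delta>" if q: "q \<in> T" for q
  proof -
    have "(f^^n) q \<in> uball Wu du ((f^^n) c) ((1+\<tau>)*\<delta>)" by (rule subsetD[OF i2 imageI[OF q]])
    then have "(f^^n) q \<in> N.mball ((f^^n) c) ((1+\<tau>)*\<delta>)" by (simp only: uball_def)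
    then show ?thesis by (simp only: N.in_mball)
  qed
  show ?thesis
  proof (intro conjI ballI impI)
    show "c \<in> T" by (rule cT)
  next
    fix q assume "q \<in> Wu x" "du ((f^^n) c) ((f^^n) q) < (1-\<tau>)*\<delta>/2"
    then show "q \<in> T" by (rule A)
  next
    fix q assume "q \<in> T"
    then show "du ((f^^n) c) ((f^^n) q) < (1+\<tau>)*\<delta>" by (rule B)
  qed
qed

lemma D0_sub: "D0 \<subseteq> Wu x"
  using openin_subset[OF lt_facts(1)] by simp

lemma tile_data:
  assumes "T \<in> tiles D0 k D n"
  shows "\<exists>c. c \<in> T \<and> T \<subseteq> Wu x \<and> (\<forall>q\<in>Wu x. du ((f^^n) c) ((f^^n) q) < (1-\<tau>)*\<delta>/2 \<longrightarrow> q \<in> T) \<and>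
         (\<forall>q\<in>T. du ((f^^n) c) ((f^^n) q) < (1+\<tau>)*\<delta>)"
proof -
  obtain c where c: "T \<subseteq> Wu x" "c \<in> Wu x" "uball Wu du ((f^^n) c) ((1-\<tau>)*\<delta>/2) \<subseteq> (f^^n) ` T"
     "(f^^n) ` T \<subseteq> uball Wu du ((f^^n) c) ((1+\<tau>)*\<delta>)"
  proof (cases "n = 0")
    case True
    then have T: "T = D0" using assms by (simp add: tiles_def)
    obtain x0 where x0: "x0 \<in> Wu x" "uball Wu du x0 ((1 - \<tau>) * \<delta> / 2) \<subseteq> D0" "D0 \<subseteq> uball Wu du x0 ((1 + \<tau>) * \<delta>)"
      using lt_facts(2) by blast
    have e: "(f^^n) = id" using True by simp
    show ?thesis
    proof (rule that[of x0])
      show "T \<subseteq> Wu x" using T D0_sub by simp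
      show "x0 \<in> Wu x" by (rule x0(1))
      show "uball Wu du ((f^^n) x0) ((1-\<tau>)*\<delta>/2) \<subseteq> (f^^n) ` T"
        unfolding e id_apply image_id T by (rule x0(2))
      show "(f^^n) ` T \<subseteq> uball Wu du ((f^^n) x0) ((1+\<tau>)*\<delta>)"
        unfolding e id_apply image_id T by (rule x0(3))
    qed
  next
    case False
    then obtain i where i: "i \<in> {1..k n}" "T = D n i" using assms by (auto simp: tiles_def)
    have n1: "n \<ge> 1" using False by simp
    from lt_facts(3)[OF n1 i(1)] obtain xi where xi: "openin W.mtopology (D n i)" "xi \<in> Wu x"
      "uball Wu du ((f ^^ n) xi) ((1 - \<tau>) * \<delta> / 2) \<subseteq> (f ^^ n) ` D n i"
      "(f ^^ n) ` D n i \<subseteq> uball Wu du ((f ^^ n) xi) ((1 + \<tau>) * \<delta>)" by blast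
    have "D n i \<subseteq> Wu x" using openin_subset[OF xi(1)] by simp
    show ?thesis
      by (rule that[of xi]) (use xi i \<open>D n i \<subseteq> Wu x\<close> in simp_all)
  qed
  have "c \<in> T \<and> (\<forall>q\<in>Wu x. du ((f^^n) c) ((f^^n) q) < (1-\<tau>)*\<delta>/2 \<longrightarrow> q \<in> T) \<and>
         (\<forall>q\<in>T. du ((f^^n) c) ((f^^n) q) < (1+\<tau>)*\<delta>)" by (rule tile_data0[OF c])
  then show ?thesis using c(1) by (intro exI[of _ c]) simp
qed

lemma tile_sub: "T \<in> tiles D0 k D n \<Longrightarrow> T \<subseteq> Wu x"
  by (drule tile_data) (elim exE conjE)

lemma atom_eq:
  assumes T: "T \<in> tiles D0 k D n" and z: "z \<in> T"
  shows "atom D0 k D (z,n) = T" "(z,n) \<in> Omega D0 k D"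
proof -
  have uniq: "A = T" if A: "A \<in> tiles D0 k D n" "z \<in> A" for A
  proof (cases "n = 0")
    case True
    then have "tiles D0 k D n = {D0}" by (simp add: tiles_def)
    then show ?thesis using A(1) T by simp
  next
    case False
    then have tn: "tiles D0 k D n = D n ` {1..k n}" by (simp add: tiles_def)
    obtain i where i: "i \<in> {1..k n}" "A = D n i"
      using A(1) unfolding tn by (rule imageE) simp
    obtain j where j: "j \<in> {1..k n}" "T = D n j"
      using T unfolding tn by (rule imageE) simp
    have n1: "n \<ge> 1" using False by simp
    show ?thesis
    proof (cases "i = j")
      case True then show ?thesis using i j by simp
    next
      case False
      then have "D n i \<inter> D n j = {}" by (rule lt_facts(4)[OF n1 i(1) j(1)])
      then have False using A(2) z i(2) j(2) by blast
      then show ?thesis ..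
    qed
  qed
  have "(THE A. A \<in> tiles D0 k D n \<and> z \<in> A) = T"
  proof (rule the_equality)
    show "T \<in> tiles D0 k D n \<and> z \<in> T" using T z by (rule conjI)
    fix A assume "A \<in> tiles D0 k D n \<and> z \<in> A"
    then show "A = T" using uniq by blast
  qed
  then show "atom D0 k D (z,n) = T" unfolding atom_def by simp
  have "z \<in> \<Union>(tiles D0 k D n)" using T z by blast
  then show "(z,n) \<in> Omega D0 k D" unfolding Omega_def by simp
qed

lemma atom_Omega:
  assumes "\<omega> \<in> Omega D0 k D"
  shows "atom D0 k D \<omega> \<in> tiles D0 k D (snd \<omega>)" "fst \<omega> \<in> atom D0 k D \<omega>"
proof -
  obtain z n where w: "\<omega> = (z,n)" by (cases \<omega>)
  then have "z \<in> \<Union>(tiles D0 k D n)" using assms unfolding Omega_def by simp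
  then obtain T where T: "T \<in> tiles D0 k D n" "z \<in> T" by blast
  have "atom D0 k D (z,n) = T" by (rule atom_eq(1)[OF T])
  then show "atom D0 k D \<omega> \<in> tiles D0 k D (snd \<omega>)" "fst \<omega> \<in> atom D0 k D \<omega>"
    using T w by simp_all
qed

lemma clos_bound:
  assumes T: "T \<subseteq> Wu x" and c: "c \<in> Wu x"
    and B: "\<forall>q\<in>T. du ((f^^n) c) ((f^^n) q) < (1+\<tau>)*\<delta>"
    and p: "p \<in> W.mtopology closure_of T"
  shows "du ((f^^n) c) ((f^^n) p) \<le> (1+\<tau>)*\<delta>"
proof (rule field_le_epsilon)
  fix e :: real assume e: "0 < e"
  interpret N: Metric_space "Wu ((f^^n) x)" du by (rule MS)
  have s2p: "0 < \<sigma>2^n" using s1 s12 by simp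
  have pW: "p \<in> Wu x" and cl: "\<forall>r>0. \<exists>q\<in>T. q \<in> W.mball p r"
    using p unfolding W.metric_closure_of by auto
  obtain q where q: "q \<in> T" "q \<in> W.mball p (e / \<sigma>2^n)" using cl e s2p by (meson divide_pos_pos)
  have qW: "q \<in> Wu x" using q T by auto
  have inN: "(f^^n) y \<in> Wu ((f^^n) x)" if "y \<in> Wu x" for y using fn_leaf that by blast
  have "du ((f^^n) c) ((f^^n) p) \<le> du ((f^^n) c) ((f^^n) q) + du ((f^^n) q) ((f^^n) p)"
    using N.triangle inN c pW qW by blast
  moreover have "du ((f^^n) c) ((f^^n) q) < (1+\<tau>)*\<delta>" using B q by auto
  moreover have "du ((f^^n) q) ((f^^n) p) \<le> \<sigma>2^n * du q p"
    using fn_exp[of p q n] pW leaf_eq[OF qW] by auto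
  moreover have "\<sigma>2^n * du q p < e"
    using q s2p by (simp add: W.commute[of p q] pos_less_divide_eq mult.commute)
  ultimately show "du ((f^^n) c) ((f^^n) p) \<le> (1+\<tau>)*\<delta> + e" by linarith
qed

lemma diam:
  assumes T: "T \<in> tiles D0 k D n" and p: "p \<in> W.mtopology closure_of T" and p': "p' \<in> W.mtopology closure_of T"
  shows "\<sigma>1^n * du p p' \<le> 2*(1+\<tau>)*\<delta>"
proof -
  obtain c where c: "c \<in> T" "T \<subseteq> Wu x" "\<forall>q\<in>T. du ((f^^n) c) ((f^^n) q) < (1+\<tau>)*\<delta>"
    using tile_data[OF T] by blast
  interpret N: Metric_space "Wu ((f^^n) x)" du by (rule MS)
  have cW: "c \<in> Wu x" using c by auto
  have pW: "p \<in> Wu x" "p' \<in> Wu x" using p p' closure_of_subset_topspace by fastforce+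
  have inN: "(f^^n) y \<in> Wu ((f^^n) x)" if "y \<in> Wu x" for y using fn_leaf that by blast
  have b1: "du ((f^^n) c) ((f^^n) p) \<le> (1+\<tau>)*\<delta>" by (rule clos_bound[OF c(2) cW c(3) p])
  have b2: "du ((f^^n) c) ((f^^n) p') \<le> (1+\<tau>)*\<delta>" by (rule clos_bound[OF c(2) cW c(3) p'])
  have "du ((f^^n) p) ((f^^n) p') \<le> du ((f^^n) p) ((f^^n) c) + du ((f^^n) c) ((f^^n) p')"
    using N.triangle inN cW pW by blast
  also have "\<dots> \<le> 2*(1+\<tau>)*\<delta>" using b1 b2 N.commute[of "(f^^n) p" "(f^^n) c"] by linarith
  finally have "du ((f^^n) p) ((f^^n) p') \<le> 2*(1+\<tau>)*\<delta>" .
  moreover have "\<sigma>1^n * du p p' \<le> du ((f^^n) p) ((f^^n) p')"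
    using fn_exp[of p' p n] pW leaf_eq[of p x] by auto
  ultimately show ?thesis by linarith
qed

lemma child:
  assumes T: "T \<in> tiles D0 k D n" and TD: "T \<subseteq> D0" and m: "a_star < m"
  shows "\<exists>T' \<in> tiles D0 k D (n+m). T' \<subseteq> T \<and> T' \<noteq> {}"
proof -
  obtain c where c: "c \<in> T" "T \<subseteq> Wu x" "\<forall>q\<in>Wu x. du ((f^^n) c) ((f^^n) q) < (1-\<tau>)*\<delta>/2 \<longrightarrow> q \<in> T"
    using tile_data[OF T] by blast
  have cW: "c \<in> Wu x" using c by auto
  have nm: "n + m \<ge> 1" using m by simp
  obtain i where i: "i \<in> {1..k (n+m)}" "c \<in> W.mtopology closure_of (D (n+m) i)"
    using lt_facts(5)[OF nm] c TD by blast
  have T't: "D (n+m) i \<in> tiles D0 k D (n+m)" using i nm by (auto simp: tiles_def)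
  obtain c' where c': "c' \<in> D (n+m) i" "D (n+m) i \<subseteq> Wu x"
      "\<forall>q\<in>D (n+m) i. du ((f^^(n+m)) c') ((f^^(n+m)) q) < (1+\<tau>)*\<delta>"
    using tile_data[OF T't] by blast
  have c'W: "c' \<in> Wu x" using c' by auto
  have bc: "du ((f^^(n+m)) c') ((f^^(n+m)) c) \<le> (1+\<tau>)*\<delta>"
    by (rule clos_bound[OF c'(2) c'W c'(3) i(2)])
  interpret N: Metric_space "Wu ((f^^(n+m)) x)" du by (rule MS)
  have inN: "(f^^(n+m)) y \<in> Wu ((f^^(n+m)) x)" if "y \<in> Wu x" for y using fn_leaf that by blast
  have sp: "0 < \<sigma>1^a_star" "\<sigma>1^a_star \<le> \<sigma>1^m" using s1 m by (auto intro: power_increasing)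
  have powr_eq: "\<sigma>1 powr (- real a_star) = 1 / \<sigma>1^a_star"
    using s1 by (simp add: powr_minus powr_realpow divide_inverse)
  have key: "2*(1+\<tau>)*\<delta> / \<sigma>1^a_star < (1-\<tau>)*\<delta>/2"
    using ineq powr_eq by (simp add: field_simps)
  have "q \<in> T" if q: "q \<in> D (n+m) i" for q
  proof -
    have qW: "q \<in> Wu x" using q c' by auto
    have "du ((f^^(n+m)) c) ((f^^(n+m)) q) \<le> du ((f^^(n+m)) c) ((f^^(n+m)) c') + du ((f^^(n+m)) c') ((f^^(n+m)) q)"
      using N.triangle inN cW c'W qW by blast
    moreover have "du ((f^^(n+m)) c') ((f^^(n+m)) q) < (1+\<tau>)*\<delta>" using c'(3) q by auto
    ultimately have d1: "du ((f^^(n+m)) c) ((f^^(n+m)) q) < 2*(1+\<tau>)*\<delta>"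
      using bc N.commute[of "(f^^(n+m)) c" "(f^^(n+m)) c'"] by linarith
    have fnq: "(f^^n) q \<in> Wu ((f^^n) c)" using fn_leaf qW leaf_eq[OF cW] by blast
    have eq: "(f^^(n+m)) y = (f^^m) ((f^^n) y)" for y by (simp add: funpow_add add.commute[of n m])
    have "\<sigma>1^m * du ((f^^n) c) ((f^^n) q) \<le> du ((f^^(n+m)) c) ((f^^(n+m)) q)"
      using fn_exp[OF fnq, of m] eq by simp
    with d1 have "\<sigma>1^m * du ((f^^n) c) ((f^^n) q) < 2*(1+\<tau>)*\<delta>" by linarith
    moreover have "\<sigma>1^a_star * du ((f^^n) c) ((f^^n) q) \<le> \<sigma>1^m * du ((f^^n) c) ((f^^n) q)"
      using sp by (intro mult_right_mono) auto
    ultimately have "\<sigma>1^a_star * du ((f^^n) c) ((f^^n) q) < 2*(1+\<tau>)*\<delta>" by linarith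
    then have "du ((f^^n) c) ((f^^n) q) < 2*(1+\<tau>)*\<delta> / \<sigma>1^a_star"
      using sp by (simp add: pos_less_divide_eq mult.commute)
    with key have "du ((f^^n) c) ((f^^n) q) < (1-\<tau>)*\<delta>/2" by linarith
    then show "q \<in> T" using c(3) qW by blast
  qed
  then show ?thesis using T't c' by blast
qed

lemma child_prop:
  assumes w: "\<omega> \<in> Omega D0 k D" and sub: "atom D0 k D \<omega> \<subseteq> D0" and b: "a_star < b"
  shows "\<exists>\<omega>'. \<omega>' \<in> Omega D0 k D \<and> snd \<omega>' = snd \<omega> + b \<and> pos_le D0 k D \<omega>' \<omega>"
proof -
  have "atom D0 k D \<omega> \<in> tiles D0 k D (snd \<omega>)" using atom_Omega[OF w] by simp
  from child[OF this sub b] obtain T' where T': "T' \<in> tiles D0 k D (snd \<omega> + b)" "T' \<subseteq> atom D0 k D \<omega>" "T' \<noteq> {}"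
    by blast
  then obtain z' where z': "z' \<in> T'" by blast
  have "(z', snd \<omega> + b) \<in> Omega D0 k D" "atom D0 k D (z', snd \<omega> + b) = T'"
    using atom_eq[OF T'(1) z'] by auto
  then show ?thesis using T'(2) unfolding pos_le_def by (intro exI[of _ "(z', snd \<omega> + b)"]) auto
qed

lemma part1:
  assumes a: "a_star < a" and b: "a_star < b" and win: "ab_winning Wu du x D0 k D a b S"
  shows "D0 \<subseteq> W.mtopology closure_of (S \<inter> D0)"
proof
  fix y assume yD: "y \<in> D0"
  have yW: "y \<in> Wu x" using yD D0_sub by auto
  obtain \<sigma> where \<sigma>: "wins Wu du x D0 k D a b S \<sigma>" using win unfolding ab_winning_alt by blast
  define K where "K = 2*(1+\<tau>)*\<delta>"
  have Kpos: "0 < K" unfolding K_def using tpos dpos by simp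
  have "\<forall>r>0. \<exists>s\<in>S \<inter> D0. s \<in> W.mball y r"
  proof (intro allI impI)
    fix r :: real assume r: "0 < r"
    obtain \<epsilon> where \<epsilon>: "\<epsilon> > 0" "W.mball y \<epsilon> \<subseteq> D0"
      using lt_facts(1) yD unfolding W.openin_mtopology by blast
    define \<rho> where "\<rho> = min \<epsilon> r"
    have \<rho>: "0 < \<rho>" "\<rho> \<le> \<epsilon>" "\<rho> \<le> r" unfolding \<rho>_def using \<epsilon> r by auto
    obtain n0 where n0: "K / \<rho> < \<sigma>1^n0" using real_arch_pow[OF s1] by blast
    define n where "n = Suc n0"
    have n1: "n \<ge> 1" unfolding n_def by simp
    have "\<sigma>1^n0 \<le> \<sigma>1^n" unfolding n_def using s1 by (intro power_increasing) auto
    then have m1: "\<rho> * \<sigma>1^n0 \<le> \<rho> * \<sigma>1^n" using \<rho> by (intro mult_left_mono) auto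
    have "K < \<rho> * \<sigma>1^n0" using n0 \<rho> by (simp add: pos_divide_less_eq mult.commute)
    with m1 have Kn: "K < \<rho> * \<sigma>1^n" by linarith
    have s1n: "0 < \<sigma>1^n" using s1 by simp
    obtain i where i: "i \<in> {1..k n}" "y \<in> W.mtopology closure_of (D n i)"
      using lt_facts(5)[OF n1] yD by blast
    define T where "T = D n i"
    have T: "T \<in> tiles D0 k D n" unfolding T_def using i n1 by (auto simp: tiles_def)
    obtain z where z: "z \<in> T" using tile_data[OF T] by blast
    have TW: "T \<subseteq> Wu x" using tile_sub[OF T] .
    have clT: "q \<in> W.mball y \<rho>" if q: "q \<in> W.mtopology closure_of T" for q
    proof -
      have "\<sigma>1^n * du y q \<le> K" using diam[OF T _ q] i(2) unfolding K_def T_def by simp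
      then have "\<sigma>1^n * du y q < \<rho> * \<sigma>1^n" using Kn by linarith
      then have "du y q < \<rho>" using s1n by (simp add: mult.commute)
      moreover have "q \<in> Wu x" using q closure_of_subset_topspace by fastforce
      ultimately show ?thesis using yW by simp
    qed
    have TclT: "T \<subseteq> W.mtopology closure_of T" using TW by (intro closure_of_subset) simp
    have clD0: "W.mtopology closure_of T \<subseteq> D0"
    proof
      fix q assume "q \<in> W.mtopology closure_of T"
      then have "q \<in> W.mball y \<rho>" by (rule clT)
      then have "q \<in> W.mball y \<epsilon>" using \<rho>(2) by simp
      then show "q \<in> D0" using \<epsilon>(2) by (rule subsetD[rotated])
    qed
    have TD0: "T \<subseteq> D0" using TclT clD0 by blast
    define child where "child \<omega> = (SOME \<omega>'. \<omega>' \<in> Omega D0 k D \<and> snd \<omega>' = snd \<omega> + b \<and> pos_le D0 k D \<omega>' \<omega>)" for \<omega>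
    have childP: "child \<omega> \<in> Omega D0 k D \<and> snd (child \<omega>) = snd \<omega> + b \<and> pos_le D0 k D (child \<omega>) \<omega>"
      if "\<omega> \<in> Omega D0 k D" "atom D0 k D \<omega> \<subseteq> D0" for \<omega>
      unfolding child_def by (rule someI_ex[OF child_prop[OF that b]])
    define bl where "bl = rec_nat [(z,n)] (\<lambda>j l. l @ [child (\<sigma> l)])"
    define bob where "bob j = bl j ! j" for j
    have bl0: "bl 0 = [(z,n)]" and blS: "bl (Suc j) = bl j @ [child (\<sigma> (bl j))]" for j
      unfolding bl_def by simp_all
    have bl_len: "length (bl j) = Suc j" for j by (induction j) (simp_all add: bl0 blS)
    have bl_nth: "\<forall>i\<le>j. bl j ! i = bob i" for j
    proof (induction j)
      case 0 then show ?case by (simp add: bob_def)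
    next
      case (Suc j)
      show ?case
      proof (intro allI impI)
        fix i assume "i \<le> Suc j"
        then consider "i = Suc j" | "i \<le> j" by linarith
        then show "bl (Suc j) ! i = bob i"
        proof cases
          case 1 then show ?thesis by (simp add: bob_def)
        next
          case 2
          then have "bl (Suc j) ! i = bl j ! i" using bl_len[of j] by (simp add: blS nth_append)
          then show ?thesis using Suc 2 by simp
        qed
      qed
    qed
    have bl_map: "map bob [0..<Suc j] = bl j" for j
      by (rule nth_equalityI) (simp_all add: bl_len bl_nth del: upt_Suc)
    define alice where "alice = play \<sigma> bob"
    have al: "alice j = \<sigma> (bl j)" for j unfolding alice_def play_def bl_map by simp
    have bob0: "bob 0 = (z,n)" unfolding bob_def by (simp add: bl0)
    have bobS: "bob (Suc j) = child (alice j)" for j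
      unfolding bob_def using bl_len[of j] by (simp add: blS nth_append al)
    have \<sigma>b: "(\<forall>j. (\<forall>i\<le>j. bok D0 k D b bob alice i) \<and> (\<forall>i<j. aok D0 k D a bob alice i) \<longrightarrow> aok D0 k D a bob alice j) \<and>
        ((\<forall>j. bok D0 k D b bob alice j \<and> aok D0 k D a bob alice j) \<longrightarrow> outcome Wu du x D0 k D alice \<in> S)"
      unfolding alice_def using \<sigma>[unfolded wins_def] by (rule spec)
    have \<sigma>b1: "aok D0 k D a bob alice j" if "\<forall>i\<le>j. bok D0 k D b bob alice i" "\<forall>i<j. aok D0 k D a bob alice i" for j
      using \<sigma>b that by blast
    have \<sigma>b2: "outcome Wu du x D0 k D alice \<in> S" if "\<forall>j. bok D0 k D b bob alice j \<and> aok D0 k D a bob alice j"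
      using \<sigma>b that by (rule conjunct2[THEN mp])
    have inv: "(\<forall>i\<le>j. bok D0 k D b bob alice i) \<and> (\<forall>i\<le>j. aok D0 k D a bob alice i) \<and> atom D0 k D (bob j) \<subseteq> T" for j
    proof (induction j)
      case 0
      have "bok D0 k D b bob alice 0" unfolding bok_def using bob0 atom_eq(2)[OF T z] by simp
      moreover then have "aok D0 k D a bob alice 0" by (intro \<sigma>b1) auto
      moreover have "atom D0 k D (bob 0) \<subseteq> T" using bob0 atom_eq(1)[OF T z] by simp
      ultimately show ?case by simp
    next
      case (Suc j)
      have aj: "aok D0 k D a bob alice j" using Suc by simp
      then have ajO: "alice j \<in> Omega D0 k D" and ajs: "atom D0 k D (alice j) \<subseteq> atom D0 k D (bob j)"
        unfolding aok_def pos_le_def by auto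
      then have ajT: "atom D0 k D (alice j) \<subseteq> T" using Suc by blast
      have cp: "child (alice j) \<in> Omega D0 k D \<and> snd (child (alice j)) = snd (alice j) + b \<and>
                pos_le D0 k D (child (alice j)) (alice j)"
        using childP[OF ajO] ajT TD0 by blast
      have bS: "bok D0 k D b bob alice (Suc j)" unfolding bok_def using cp bobS by simp
      have bA: "\<forall>i\<le>Suc j. bok D0 k D b bob alice i"
      proof (intro allI impI)
        fix i assume "i \<le> Suc j"
        then consider "i \<le> j" | "i = Suc j" by linarith
        then show "bok D0 k D b bob alice i" using Suc bS by cases auto
      qed
      have aA: "\<forall>i<Suc j. aok D0 k D a bob alice i"
      proof (intro allI impI)
        fix i assume "i < Suc j"
        then have "i \<le> j" by simp
        then show "aok D0 k D a bob alice i" using Suc by blast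
      qed
      have aS: "aok D0 k D a bob alice (Suc j)" using bA aA by (rule \<sigma>b1)
      have "\<forall>i\<le>Suc j. aok D0 k D a bob alice i"
      proof (intro allI impI)
        fix i assume "i \<le> Suc j"
        then consider "i < Suc j" | "i = Suc j" by linarith
        then show "aok D0 k D a bob alice i" using aA aS by cases auto
      qed
      moreover have "atom D0 k D (bob (Suc j)) \<subseteq> T" using cp bobS ajT unfolding pos_le_def by auto
      ultimately show ?case using bA by simp
    qed
    have allok: "\<forall>j. bok D0 k D b bob alice j \<and> aok D0 k D a bob alice j" using inv by blast
    then have outS: "outcome Wu du x D0 k D alice \<in> S" by (rule \<sigma>b2)
    have lev: "j \<le> snd (alice j)" for j
    proof (induction j)
      case 0 then show ?case by simp
    next
      case (Suc j)
      have "snd (alice (Suc j)) = snd (bob (Suc j)) + a" using allok unfolding aok_def by blast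
      moreover have "snd (bob (Suc j)) = snd (alice j) + b" using allok[rule_format, of "Suc j"] unfolding bok_def by simp
      ultimately show ?case using Suc a by simp
    qed
    have aO: "alice j \<in> Omega D0 k D" for j using allok unfolding aok_def by blast
    define C where "C j = W.mtopology closure_of atom D0 k D (alice j)" for j
    have atT: "atom D0 k D (alice j) \<in> tiles D0 k D (snd (alice j))" for j using atom_Omega[OF aO] by simp
    have pC: "fst (alice j) \<in> C j" for j
    proof -
      have "fst (alice j) \<in> atom D0 k D (alice j)" using atom_Omega(2)[OF aO] .
      moreover have "atom D0 k D (alice j) \<subseteq> C j" unfolding C_def
        using tile_sub[OF atT] by (intro closure_of_subset) simp
      ultimately show ?thesis by (rule subsetD[rotated])
    qed
    have CW: "C j \<subseteq> Wu x" for j unfolding C_def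
      using closure_of_subset_topspace[of W.mtopology] by simp
    have "\<exists>l. l \<in> Wu x \<and> \<Inter> (range C) = {l}"
    proof (rule complete[of x, unfolded W.mcomplete_nest_sing, rule_format], intro conjI allI impI)
      show "closedin W.mtopology (C j)" for j unfolding C_def by simp
      show "C j \<noteq> {}" for j using pC[of j] by blast
      show "decseq C" unfolding decseq_def
      proof (intro allI impI)
        fix m m' :: nat assume "m \<le> m'"
        then have "pos_le D0 k D (alice m') (alice m)" by (rule nested[OF allok])
        then show "C m' \<le> C m" unfolding C_def pos_le_def by (rule closure_of_mono)
      qed
      fix e :: real assume e: "0 < e"
      obtain j where j: "K / e < \<sigma>1^j" using real_arch_pow[OF s1] by blast
      have sj: "0 < \<sigma>1^j" using s1 by simp
      have Kj: "K < e * \<sigma>1^j" using j e by (simp add: pos_divide_less_eq mult.commute)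
      have "C j \<subseteq> W.mcball (fst (alice j)) e"
      proof
        fix q assume q: "q \<in> C j"
        have p: "fst (alice j) \<in> C j" by (rule pC)
        have "\<sigma>1^snd (alice j) * du (fst (alice j)) q \<le> K"
          using diam[OF atT] p q unfolding C_def K_def by simp
        moreover have "\<sigma>1^j \<le> \<sigma>1^snd (alice j)" using lev s1 by (intro power_increasing) auto
        moreover have "\<sigma>1^j * du (fst (alice j)) q \<le> \<sigma>1^snd (alice j) * du (fst (alice j)) q"
          using \<open>\<sigma>1^j \<le> \<sigma>1^snd (alice j)\<close> by (rule mult_right_mono) simp
        ultimately have "\<sigma>1^j * du (fst (alice j)) q \<le> K" by linarith
        then have "\<sigma>1^j * du (fst (alice j)) q < e * \<sigma>1^j" using Kj by linarith
        then have "du (fst (alice j)) q < e" using sj by (simp add: mult.commute)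
        moreover have "fst (alice j) \<in> Wu x" "q \<in> Wu x"
          using p q CW by blast+
        ultimately show "q \<in> W.mcball (fst (alice j)) e" by simp
      qed
      then show "\<exists>n a. C n \<subseteq> W.mcball a e" by blast
    qed
    then obtain l where l: "l \<in> Wu x" "\<Inter> (range C) = {l}" by blast
    have lC: "l \<in> C j" for j
    proof -
      have "l \<in> \<Inter> (range C)" using l(2) by simp
      then show ?thesis by blast
    qed
    have "outcome Wu du x D0 k D alice = l"
      unfolding outcome_def leaftop_def
    proof (rule the_equality)
      show "l \<in> Wu x \<and> (\<forall>j. l \<in> W.mtopology closure_of atom D0 k D (alice j))"
        using l(1) lC unfolding C_def by blast
      fix z' assume "z' \<in> Wu x \<and> (\<forall>j. z' \<in> W.mtopology closure_of atom D0 k D (alice j))"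
      then have "z' \<in> \<Inter> (range C)" unfolding C_def by blast
      then show "z' = l" using l by blast
    qed
    then have lS: "l \<in> S" using outS by simp
    have "atom D0 k D (alice 0) \<subseteq> T"
      using allok[rule_format, of 0] atom_eq(1)[OF T z] bob0 unfolding aok_def pos_le_def by auto
    then have "C 0 \<subseteq> W.mtopology closure_of T" unfolding C_def by (rule closure_of_mono)
    moreover have "l \<in> C 0" by (rule lC)
    ultimately have "l \<in> W.mball y \<rho>" using clT by blast
    then have "l \<in> D0" "l \<in> W.mball y r" using \<epsilon> \<rho> by auto
    then show "\<exists>s\<in>S \<inter> D0. s \<in> W.mball y r" using lS by blast
  qed
  then show "y \<in> W.mtopology closure_of (S \<inter> D0)"
    unfolding W.metric_closure_of using yW by simp
qed

end

theorem proposition2p8: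
  fixes f :: "'a \<Rightarrow> 'a" and Wu :: "'a \<Rightarrow> 'a set" and du :: "'a \<Rightarrow> 'a \<Rightarrow> real"
    and \<sigma>1 \<sigma>2 \<delta> \<tau> :: real and x :: 'a and D0 :: "'a set"
    and k :: "nat \<Rightarrow> nat" and D :: "nat \<Rightarrow> nat \<Rightarrow> 'a set" and a_star :: nat
  assumes "unstable_leaf_system f Wu du \<sigma>1 \<sigma>2"
    and "local_tilings f Wu du x D0 \<delta> \<tau> k D"
    and "0 < a_star"
    and "(1 + \<tau>) * \<delta> * \<sigma>1 powr (- real a_star) < (1 - \<tau>) * \<delta> / 4"
  shows "(\<forall>a b S. a_star < a \<and> a_star < b \<and> ab_winning Wu du x D0 k D a b S
            \<longrightarrow> D0 \<subseteq> leaftop Wu du x closure_of (S \<inter> D0))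
       \<and> (\<forall>a Ss. a_star < a \<and> (\<forall>i::nat. a_winning Wu du x D0 k D a_star a (Ss i))
            \<longrightarrow> a_winning Wu du x D0 k D a_star a (\<Inter>i. Ss i))"
proof -
  interpret tset f Wu du \<sigma>1 \<sigma>2 \<delta> \<tau> x D0 k D a_star
    using assms(1,2,4) by unfold_locales
  have p1: "\<forall>a b S. a_star < a \<and> a_star < b \<and> ab_winning Wu du x D0 k D a b S
            \<longrightarrow> D0 \<subseteq> leaftop Wu du x closure_of (S \<inter> D0)"
    unfolding leaftop_def
  proof (intro allI impI)
    fix a b S assume H: "a_star < a \<and> a_star < b \<and> ab_winning Wu du x D0 k D a b S"
    show "D0 \<subseteq> Metric_space.mtopology (Wu x) du closure_of (S \<inter> D0)"
      by (rule part1[where a=a and b=b]) (use H in simp_all)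
  qed
  have p2: "\<forall>a Ss. a_star < a \<and> (\<forall>i::nat. a_winning Wu du x D0 k D a_star a (Ss i))
            \<longrightarrow> a_winning Wu du x D0 k D a_star a (\<Inter>i. Ss i)"
  proof (intro allI impI)
    fix a Ss assume H: "a_star < a \<and> (\<forall>i::nat. a_winning Wu du x D0 k D a_star a (Ss i))"
    show "a_winning Wu du x D0 k D a_star a (\<Inter>i. Ss i)"
      by (rule part2) (use H in simp_all)
  qed
  show ?thesis using p1 p2 by (rule conjI)
qed

end
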